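(* Let $n\ge 3$ and let $\preceq$ be an admissible partial order on $\Lambda$. Let $\mathbf{T}(\preceq)$ be the set of all tilings $T$ such that for every 4-element subset $F\subseteq[n]$, the set $T\cap\mathrm{stick}(F)$ is an initial segment of $\mathrm{stick}(F)$ if $\preceq$ orders the stick of $F$ lexicographically, and a final segment of $\mathrm{stick}(F)$ if $\preceq$ orders it anti-lexicographically. Then $\mathbf{T}(\preceq)$ is a Condorcet super-domain which is maximal by inclusion: for every tiling $T\notin\mathbf{T}(\preceq)$, the set $\mathbf{T}(\preceq)\cup\{T\}$ is not a Condorcet super-domain.
   Context: Fix an integer $n\ge 3$ and write $[n]=\{1,\dots,n\}$. Let $\Lambda$ be the set of 3-element subsets of $[n]$; a triple $\{i,j,k\}$ with $i<j<k$ is written $ijk$. For a 4-element subset $F=\{i<j<k<l\}$ of $[n]$, the stick of $F$, $\mathrm{stick}(F)$, is the sequence $(ijk,\ ijl,\ ikl,\ jkl)$ (the lexicographic order on these four triples); the reverse sequence is the anti-lexicographic order. A tiling (the inversion set of a rhombus tiling of the zonogon $Z(n;2)$) is a subset $T\subseteq\Lambda$ such that for every 4-element $F\subseteq[n]$, $T\cap\mathrm{stick}(F)$ is an initial segment or a final segment of $\mathrm{stick}(F)$ (empty set and whole stick allowed). Let $\mathbf T$ be the set of tilings. For a finite set $V$ of odd cardinality and tilings $(T_v)_{v\in V}$, $sm((T_v)_{v\in V})$ is the set of triples lying in $T_v$ for more than $|V|/2$ indices $v$. A subset $\mathbf D\subseteq\mathbf T$ is a Condorcet super-domain if for every finite $V$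 of odd cardinality and every family $(T_v)_{v\in V}$ with all $T_v\in\mathbf D$, $sm((T_v)_{v\in V})$ is a tiling. A partial order $\preceq$ on $\Lambda$ is admissible if for every 4-element $F\subseteq[n]$ its restriction to the four triples of $\mathrm{stick}(F)$ is the lexicographic linear order or the anti-lexicographic linear order. *)

theory Defs
  imports Main
begin

definition Lambda :: "nat \<Rightarrow> nat set set" where
  "Lambda n = {S. S \<subseteq> {1..n} \<and> card S = 3}"

text \<open>For F = {i<j<k<l}, stick F = [ijk, ijl, ikl, jkl]
  (obtained by removing l, k, j, i respectively).\<close>
definition stick :: "nat set \<Rightarrow> nat set list" where
  "stick F = map (\<lambda>x. F - {x}) (rev (sorted_list_of_set F))"

definition is_initial_seg :: "'a set \<Rightarrow> 'a list \<Rightarrow> bool" where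
  "is_initial_seg A xs \<longleftrightarrow> (\<exists>m\<le>length xs. A \<inter> set xs = set (take m xs))"

definition is_final_seg :: "'a set \<Rightarrow> 'a list \<Rightarrow> bool" where
  "is_final_seg A xs \<longleftrightarrow> (\<exists>m\<le>length xs. A \<inter> set xs = set (drop m xs))"

definition quads :: "nat \<Rightarrow> nat set set" where
  "quads n = {F. F \<subseteq> {1..n} \<and> card F = 4}"

definition tilings :: "nat \<Rightarrow> nat set set set" where
  "tilings n = {T. T \<subseteq> Lambda n \<and>
     (\<forall>F\<in>quads n. is_initial_seg T (stick F) \<or> is_final_seg T (stick F))}"

definition sm :: "'v set \<Rightarrow> ('v \<Rightarrow> nat set set) \<Rightarrow> nat set set" where
  "sm V Ts = {t. 2 * card {v\<in>V. t \<in> Ts v} > card V}"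

text \<open>Condorcet super-domain (index sets V taken as finite sets of naturals,
  which is no loss of generality).\<close>
definition condorcet_super :: "nat \<Rightarrow> nat set set set \<Rightarrow> bool" where
  "condorcet_super n D \<longleftrightarrow> D \<subseteq> tilings n \<and>
     (\<forall>(V::nat set) Ts. finite V \<and> odd (card V) \<and> (\<forall>v\<in>V. Ts v \<in> D)
        \<longrightarrow> sm V Ts \<in> tilings n)"

definition lex_on :: "(nat set \<times> nat set) set \<Rightarrow> nat set \<Rightarrow> bool" where
  "lex_on R F \<longleftrightarrow> (\<forall>a<4. \<forall>b<4. (stick F ! a, stick F ! b) \<in> R \<longleftrightarrow> a \<le> b)"

definition antilex_on :: "(nat set \<times> nat set) set \<Rightarrow> nat set \<Rightarrow> bool" where
  "antilex_on R F \<longleftrightarrow> (\<forall>a<4. \<forall>b<4. (stick F ! a, stick F ! b) \<in> R \<longleftrightarrow> b \<le> a)"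

definition admissible :: "nat \<Rightarrow> (nat set \<times> nat set) set \<Rightarrow> bool" where
  "admissible n R \<longleftrightarrow> partial_order_on (Lambda n) R \<and>
     (\<forall>F\<in>quads n. lex_on R F \<or> antilex_on R F)"

definition Tprec :: "nat \<Rightarrow> (nat set \<times> nat set) set \<Rightarrow> nat set set set" where
  "Tprec n R = {T\<in>tilings n. \<forall>F\<in>quads n.
      (lex_on R F \<longrightarrow> is_initial_seg T (stick F)) \<and>
      (antilex_on R F \<longrightarrow> is_final_seg T (stick F))}"

end

theory Submission
  imports Defs
begin

lemma ex4: "(\<exists>m\<le>Suc (Suc (Suc (Suc 0))). P m) \<longleftrightarrow> P 0 \<or> P (Suc 0) \<or> P (Suc (Suc 0)) \<or> P (Suc (Suc (Suc 0))) \<or> P (Suc (Suc (Suc (Suc 0))))"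
  by (auto simp: le_Suc_eq)
lemma eqS: "X \<subseteq> S \<Longrightarrow> (A \<inter> S = X) \<longleftrightarrow> (\<forall>x\<in>S. x\<in>A \<longleftrightarrow> x\<in>X)"
  by blast
lemma eq4: "X \<subseteq> {a,b,c,d} \<Longrightarrow> (A \<inter> set [a,b,c,d] = X) \<longleftrightarrow>
   (a\<in>A \<longleftrightarrow> a\<in>X) \<and> (b\<in>A \<longleftrightarrow> b\<in>X) \<and> (c\<in>A \<longleftrightarrow> c\<in>X) \<and> (d\<in>A \<longleftrightarrow> d\<in>X)"
  by (subst eqS) simp_all
lemma init4:
  assumes "distinct [a,b,c,d]"
  shows "is_initial_seg A [a,b,c,d] \<longleftrightarrow> (b\<in>A\<longrightarrow>a\<in>A) \<and> (c\<in>A\<longrightarrow>b\<in>A) \<and> (d\<in>A\<longrightarrow>c\<in>A)"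
  using assms unfolding is_initial_seg_def
  apply (simp only: length_Cons list.size ex4)
  apply (subst eq4, force)+
  apply simp
  apply blast
  done
lemma final4:
  assumes "distinct [a,b,c,d]"
  shows "is_final_seg A [a,b,c,d] \<longleftrightarrow> (a\<in>A\<longrightarrow>b\<in>A) \<and> (b\<in>A\<longrightarrow>c\<in>A) \<and> (c\<in>A\<longrightarrow>d\<in>A)"
  using assms unfolding is_final_seg_def
  apply (simp only: length_Cons list.size ex4)
  apply (subst eq4, force)+
  apply simp
  apply blast
  done


lemma filter_insert: "{v \<in> insert a S. P v} = (if P a then insert a {v\<in>S. P v} else {v\<in>S. P v})"
  by auto

lemma maj3: "t \<in> sm {0,1,2::nat} (\<lambda>v. if v=0 then A else if v=1 then B else C) \<longleftrightarrow>
   (t\<in>A \<and> t\<in>B) \<or> (t\<in>A \<and> t\<in>C) \<or> (t\<in>B \<and> t\<in>C)"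
  unfolding sm_def
  apply (simp only: filter_insert)
  by (cases "t\<in>A"; cases "t\<in>B"; cases "t\<in>C"; simp add: filter_insert)

lemma len4: "length xs = 4 \<Longrightarrow> \<exists>a b c d. xs = [a,b,c,d]"
  by (simp add: numeral_eq_Suc length_Suc_conv) blast

lemma stick_form:
  assumes "F \<in> quads n"
  shows "\<exists>a b c d. stick F = [a,b,c,d] \<and> distinct [a,b,c,d] \<and> set [a,b,c,d] \<subseteq> Lambda n"
proof -
  have F: "F \<subseteq> {1..n}" "card F = 4" using assms by (auto simp: quads_def)
  then have fin: "finite F" by (metis card.infinite zero_neq_numeral)
  define L where "L = sorted_list_of_set F"
  have L: "length L = 4" "distinct L" "set L = F" using fin F by (auto simp: L_def)
  have inj: "inj_on (\<lambda>x. F - {x}) F" by (auto simp: inj_on_def)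
  have st: "stick F = map (\<lambda>x. F - {x}) (rev L)" by (simp add: stick_def L_def)
  have len: "length (stick F) = 4" using L st by simp
  have dist: "distinct (stick F)" using L st inj by (simp add: distinct_map)
  have sub: "set (stick F) \<subseteq> Lambda n"
  proof
    fix S assume "S \<in> set (stick F)"
    then obtain x where x: "x \<in> F" "S = F - {x}" using st L by auto
    then have "card S = 3" using F fin by (simp add: card_Diff_singleton)
    then show "S \<in> Lambda n" using x F by (auto simp: Lambda_def)
  qed
  from len4[OF len] obtain a b c d where abcd: "stick F = [a,b,c,d]" by blast
  have "distinct [a,b,c,d]" "set [a,b,c,d] \<subseteq> Lambda n" using dist sub abcd by simp_all
  then show ?thesis using abcd by blast
qed


lemma all4: "(\<forall>i<(4::nat). P i) \<longleftrightarrow> P 0 \<and> P (Suc 0) \<and> P (Suc (Suc 0)) \<and> P (Suc (Suc (Suc 0)))"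
  by (auto simp: less_Suc_eq numeral_eq_Suc)

definition ord4 :: "(nat set \<times> nat set) set \<Rightarrow> nat set \<Rightarrow> nat set \<Rightarrow> nat set \<Rightarrow> nat set \<Rightarrow> bool" where
  "ord4 R a b c d \<longleftrightarrow> (a,a)\<in>R \<and> (a,b)\<in>R \<and> (a,c)\<in>R \<and> (a,d)\<in>R \<and> (b,a)\<notin>R \<and> (b,b)\<in>R \<and> (b,c)\<in>R \<and> (b,d)\<in>R
     \<and> (c,a)\<notin>R \<and> (c,b)\<notin>R \<and> (c,c)\<in>R \<and> (c,d)\<in>R \<and> (d,a)\<notin>R \<and> (d,b)\<notin>R \<and> (d,c)\<notin>R \<and> (d,d)\<in>R"

lemma lex_ord4: "lex_on R F \<Longrightarrow> stick F = [a,b,c,d] \<Longrightarrow> ord4 R a b c d"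
  unfolding lex_on_def ord4_def by (simp only: all4) simp

lemma antilex_ord4: "antilex_on R F \<Longrightarrow> stick F = [a,b,c,d] \<Longrightarrow> ord4 R d c b a"
  unfolding antilex_on_def ord4_def by (simp only: all4) simp


lemma sm_mono:
  assumes "finite V" "\<forall>v\<in>V. x \<in> Ts v \<longrightarrow> y \<in> Ts v" "x \<in> sm V Ts"
  shows "y \<in> sm V Ts"
proof -
  have "card {v\<in>V. x \<in> Ts v} \<le> card {v\<in>V. y \<in> Ts v}"
    using assms by (intro card_mono) auto
  then show ?thesis using assms(3) by (simp add: sm_def)
qed

lemma sm_sub:
  assumes "\<forall>v\<in>V. Ts v \<subseteq> Lambda n"
  shows "sm V Ts \<subseteq> Lambda n"
proof
  fix t assume t: "t \<in> sm V Ts"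
  show "t \<in> Lambda n"
  proof (rule ccontr)
    assume "t \<notin> Lambda n"
    then have E: "{v\<in>V. t \<in> Ts v} = {}" using assms by auto
    have "card V < 2 * card {v\<in>V. t \<in> Ts v}" using t by (simp add: sm_def)
    then show False unfolding E by simp
  qed
qed

definition seg4 :: "nat set set \<Rightarrow> nat set \<Rightarrow> nat set \<Rightarrow> nat set \<Rightarrow> nat set \<Rightarrow> bool" where
  "seg4 A w x y z \<longleftrightarrow> ((x\<in>A\<longrightarrow>w\<in>A) \<and> (y\<in>A\<longrightarrow>x\<in>A) \<and> (z\<in>A\<longrightarrow>y\<in>A)) \<or>
                     ((w\<in>A\<longrightarrow>x\<in>A) \<and> (x\<in>A\<longrightarrow>y\<in>A) \<and> (y\<in>A\<longrightarrow>z\<in>A))"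

lemma tiling_seg4:
  assumes "S \<in> tilings n" "F \<in> quads n" "stick F = [a,b,c,d]" "distinct [a,b,c,d]"
  shows "seg4 S a b c d" "seg4 S d c b a"
proof -
  have "is_initial_seg S (stick F) \<or> is_final_seg S (stick F)"
    using assms(1,2) unfolding tilings_def by blast
  then show "seg4 S a b c d" "seg4 S d c b a"
    unfolding assms(3) init4[OF assms(4)] final4[OF assms(4)] seg4_def by blast+
qed

lemma D_in:
  assumes adm: "admissible n R"
  shows "{u. (u,x) \<in> R} \<in> Tprec n R"
proof -
  have po: "R \<subseteq> Lambda n \<times> Lambda n" "trans R"
    using adm by (auto simp: admissible_def partial_order_on_def preorder_on_def)
  let ?D = "{u. (u,x) \<in> R}"
  have sub: "?D \<subseteq> Lambda n" using po by auto
  have main: "(lex_on R F \<longrightarrow> is_initial_seg ?D (stick F)) \<and>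
      (antilex_on R F \<longrightarrow> is_final_seg ?D (stick F))" if F: "F \<in> quads n" for F
  proof -
    obtain a b c d where abcd: "stick F = [a,b,c,d]" "distinct [a,b,c,d]"
      using stick_form[OF F] by blast
    have tr: "\<And>p q. (p,q) \<in> R \<Longrightarrow> (q,x) \<in> R \<Longrightarrow> (p,x) \<in> R" using po(2) by (meson transD)
    show ?thesis
    proof (intro conjI impI)
      assume "lex_on R F"
      then have "ord4 R a b c d" using lex_ord4 abcd by blast
      then have "(a,b)\<in>R" "(b,c)\<in>R" "(c,d)\<in>R" unfolding ord4_def by simp_all
      then show "is_initial_seg ?D (stick F)" unfolding abcd(1) init4[OF abcd(2)]
        using tr by simp
    next
      assume "antilex_on R F"
      then have "ord4 R d c b a" using antilex_ord4 abcd by blast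
      then have "(b,a)\<in>R" "(c,b)\<in>R" "(d,c)\<in>R" unfolding ord4_def by simp_all
      then show "is_final_seg ?D (stick F)" unfolding abcd(1) final4[OF abcd(2)]
        using tr by simp
    qed
  qed
  have "?D \<in> tilings n"
    unfolding tilings_def using sub main adm by (auto simp: admissible_def)
  then show ?thesis using main unfolding Tprec_def by blast
qed

lemma empty_in: "{} \<in> Tprec n R"
proof -
  have main: "is_initial_seg {} (stick F) \<and> is_final_seg {} (stick F)" if F: "F \<in> quads n" for F
  proof -
    obtain a b c d where abcd: "stick F = [a,b,c,d]" "distinct [a,b,c,d]"
      using stick_form[OF F] by blast
    show ?thesis unfolding abcd(1) init4[OF abcd(2)] final4[OF abcd(2)] by simp
  qed
  then show ?thesis by (simp add: Tprec_def tilings_def)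
qed

lemma part1:
  assumes adm: "admissible n R"
  shows "condorcet_super n (Tprec n R)"
  unfolding condorcet_super_def
proof (intro conjI allI impI)
  show "Tprec n R \<subseteq> tilings n" by (auto simp: Tprec_def)
  fix V :: "nat set" and Ts
  assume H: "finite V \<and> odd (card V) \<and> (\<forall>v\<in>V. Ts v \<in> Tprec n R)"
  then have fin: "finite V" and TsP: "\<forall>v\<in>V. Ts v \<in> Tprec n R" by auto
  have sub: "sm V Ts \<subseteq> Lambda n"
    using TsP by (intro sm_sub) (auto simp: Tprec_def tilings_def)
  have "is_initial_seg (sm V Ts) (stick F) \<or> is_final_seg (sm V Ts) (stick F)"
    if F: "F \<in> quads n" for F
  proof -
    obtain a b c d where abcd: "stick F = [a,b,c,d]" "distinct [a,b,c,d]"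
      using stick_form[OF F] by blast
    have "lex_on R F \<or> antilex_on R F" using adm F by (auto simp: admissible_def)
    then show ?thesis
    proof
      assume L: "lex_on R F"
      have "\<forall>v\<in>V. is_initial_seg (Ts v) (stick F)" using TsP L F by (auto simp: Tprec_def)
      then have I: "\<forall>v\<in>V. (b\<in>Ts v\<longrightarrow>a\<in>Ts v) \<and> (c\<in>Ts v\<longrightarrow>b\<in>Ts v) \<and> (d\<in>Ts v\<longrightarrow>c\<in>Ts v)"
        unfolding abcd(1) init4[OF abcd(2)] by blast
      have "b \<in> sm V Ts \<longrightarrow> a \<in> sm V Ts" using sm_mono[OF fin, where x=b and y=a] I by blast
      moreover have "c \<in> sm V Ts \<longrightarrow> b \<in> sm V Ts" using sm_mono[OF fin, where x=c and y=b] I by blast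
      moreover have "d \<in> sm V Ts \<longrightarrow> c \<in> sm V Ts" using sm_mono[OF fin, where x=d and y=c] I by blast
      ultimately have "is_initial_seg (sm V Ts) (stick F)"
        unfolding abcd(1) init4[OF abcd(2)] by blast
      then show ?thesis by blast
    next
      assume L: "antilex_on R F"
      have "\<forall>v\<in>V. is_final_seg (Ts v) (stick F)" using TsP L F by (auto simp: Tprec_def)
      then have I: "\<forall>v\<in>V. (a\<in>Ts v\<longrightarrow>b\<in>Ts v) \<and> (b\<in>Ts v\<longrightarrow>c\<in>Ts v) \<and> (c\<in>Ts v\<longrightarrow>d\<in>Ts v)"
        unfolding abcd(1) final4[OF abcd(2)] by blast
      have "a \<in> sm V Ts \<longrightarrow> b \<in> sm V Ts" using sm_mono[OF fin, where x=a and y=b] I by blast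
      moreover have "b \<in> sm V Ts \<longrightarrow> c \<in> sm V Ts" using sm_mono[OF fin, where x=b and y=c] I by blast
      moreover have "c \<in> sm V Ts \<longrightarrow> d \<in> sm V Ts" using sm_mono[OF fin, where x=c and y=d] I by blast
      ultimately have "is_final_seg (sm V Ts) (stick F)"
        unfolding abcd(1) final4[OF abcd(2)] by blast
      then show ?thesis by blast
    qed
  qed
  then show "sm V Ts \<in> tilings n" using sub by (simp add: tilings_def)
qed

lemma core:
  assumes adm: "admissible n R" and ord: "ord4 R w x y z"
    and Tfin: "(w\<in>T\<longrightarrow>x\<in>T) \<and> (x\<in>T\<longrightarrow>y\<in>T) \<and> (y\<in>T\<longrightarrow>z\<in>T)"
    and Tnot: "\<not> ((x\<in>T\<longrightarrow>w\<in>T) \<and> (y\<in>T\<longrightarrow>x\<in>T) \<and> (z\<in>T\<longrightarrow>y\<in>T))"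
    and cs: "condorcet_super n (insert T (Tprec n R))"
    and segs: "\<forall>S\<in>tilings n. seg4 S w x y z"
  shows False
proof -
  have key: "seg4 (sm {0,1,2::nat} (\<lambda>v. if v=0 then T else if v=1 then T1 else T2)) w x y z"
    if "T1 \<in> Tprec n R" "T2 \<in> Tprec n R" for T1 T2
  proof -
    let ?Ts = "\<lambda>v::nat. if v=0 then T else if v=1 then T1 else T2"
    have "\<forall>v\<in>{0,1,2::nat}. ?Ts v \<in> insert T (Tprec n R)" using that by auto
    moreover have "finite {0,1,2::nat}" "odd (card {0,1,2::nat})" by auto
    ultimately have "sm {0,1,2::nat} ?Ts \<in> tilings n"
      using cs[unfolded condorcet_super_def, THEN conjunct2, rule_format, of "{0,1,2::nat}" ?Ts]
      by blast
    then show ?thesis using segs by blast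
  qed
  have R: "(w,y)\<in>R" "(x,y)\<in>R" "(y,y)\<in>R" "(z,y)\<notin>R" "(w,z)\<in>R" "(x,z)\<in>R" "(y,z)\<in>R" "(z,z)\<in>R"
    "(w,w)\<in>R" "(x,w)\<notin>R" "(y,w)\<notin>R" "(z,w)\<notin>R"
    using ord unfolding ord4_def by simp_all
  show False
  proof (cases "x \<in> T")
    case True
    then have T: "w \<notin> T" "x \<in> T" "y \<in> T" "z \<in> T" using Tfin Tnot by blast+
    let ?S = "sm {0,1,2::nat} (\<lambda>v. if v=0 then T else if v=1 then {u. (u,y)\<in>R} else {})"
    have "w \<notin> ?S" "x \<in> ?S" "y \<in> ?S" "z \<notin> ?S" unfolding maj3 using T R by simp_all
    moreover have "seg4 ?S w x y z" using key[OF D_in[OF adm, of y] empty_in] .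
    ultimately show False unfolding seg4_def by simp
  next
    case False
    then have T: "w \<notin> T" "x \<notin> T" "z \<in> T" using Tfin Tnot by blast+
    let ?S = "sm {0,1,2::nat} (\<lambda>v. if v=0 then T else if v=1 then {u. (u,z)\<in>R} else {u. (u,w)\<in>R})"
    have "w \<in> ?S" "x \<notin> ?S" "z \<in> ?S" "y \<in> ?S \<longleftrightarrow> y \<in> T" unfolding maj3 using T R by simp_all
    moreover have "seg4 ?S w x y z" using key[OF D_in[OF adm, of z] D_in[OF adm, of w]] .
    ultimately show False unfolding seg4_def using Tnot T by blast
  qed
qed

theorem theorem2:
  fixes n :: nat and R :: "(nat set \<times> nat set) set"
  assumes "n \<ge> 3" and "admissible n R"
  shows "condorcet_super n (Tprec n R) \<and>
    (\<forall>T\<in>tilings n. T \<notin> Tprec n R \<longrightarrow> \<not> condorcet_super n (insert T (Tprec n R)))"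
proof (intro conjI ballI impI notI)
  show "condorcet_super n (Tprec n R)" using part1[OF assms(2)] .
next
  fix T assume T: "T \<in> tilings n" "T \<notin> Tprec n R"
    and cs: "condorcet_super n (insert T (Tprec n R))"
  obtain F where F: "F \<in> quads n" and
    bad: "(lex_on R F \<and> \<not> is_initial_seg T (stick F)) \<or> (antilex_on R F \<and> \<not> is_final_seg T (stick F))"
    using T unfolding Tprec_def by blast
  obtain a b c d where abcd: "stick F = [a,b,c,d]" "distinct [a,b,c,d]"
    using stick_form[OF F] by blast
  have tseg: "is_initial_seg T (stick F) \<or> is_final_seg T (stick F)"
    using T F by (auto simp: tilings_def)
  from bad show False
  proof
    assume L: "lex_on R F \<and> \<not> is_initial_seg T (stick F)"
    then have ord: "ord4 R a b c d" using lex_ord4 abcd by blast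
    show False
      apply (rule core[OF assms(2) ord _ _ cs])
      using L tseg unfolding abcd(1) init4[OF abcd(2)] final4[OF abcd(2)] apply blast
      using L tseg unfolding abcd(1) init4[OF abcd(2)] final4[OF abcd(2)] apply blast
      using tiling_seg4(1)[OF _ F abcd] by blast
  next
    assume L: "antilex_on R F \<and> \<not> is_final_seg T (stick F)"
    then have ord: "ord4 R d c b a" using antilex_ord4 abcd by blast
    show False
      apply (rule core[OF assms(2) ord _ _ cs])
      using L tseg unfolding abcd(1) init4[OF abcd(2)] final4[OF abcd(2)] apply blast
      using L tseg unfolding abcd(1) init4[OF abcd(2)] final4[OF abcd(2)] apply blast
      using tiling_seg4(2)[OF _ F abcd] by blast
  qed
qed

end
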